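(* Let $\mathfrak S=(S,\xrightarrow{F},\le)$ be an $\infty$-effective complete functional WSTS, $s_0\in S$, and, for a (fair) execution of the procedure $\mathbf{Clover}_{\mathfrak S}$ on input $s_0$, let $A_n$ be the value of the set $A$ after $n$ iterations of the while statement. If $\bigcup_n A_n$ is finite, then the procedure $\mathbf{Clover}_{\mathfrak S}$ terminates on input $s_0$.
   Context: A complete functional WSTS is a functional transition system $(S,\xrightarrow{F},\le)$ ($F$ a finite set of partial maps, $s\to f(s)$ for $s\in\operatorname{dom}f$) such that $(S,\le)$ is a well partial order which is a continuous dcpo, and each $f\in F$ is partial continuous (Scott-open domain, $f(\bigvee D)=\bigvee f(D)$ for directed $D\subseteq\operatorname{dom}f$). $Post(A)$ is the set of one-step successors of elements of $A$. $F^*$: finite compositions of maps in $F$. Lub-acceleration: $\operatorname{dom}g^\infty=\operatorname{dom}g$, $g^\infty(x)=\bigvee_n g^n(x)$ if $x<g(x)$, else $g(x)$. $\infty$-effective: states finitely coded, $\le$ decidable, each $f\in F$ computable with decidable domain, each $g^\infty$ ($g\in F^*$) computable. Procedure $\mathbf{Clover}_{\mathfrak S}(s_0)$: $A\leftarrow\{s_0\}$; while $Post(A)\not\le^\flat A$ do: choose fairly $(g,a)\in F^*\times A$ with $a\in\operatorname{dom}g$ and set $A\leftarrow A\cup\{g^\infty(a)\}$; return $\operatorname{Max}A$. Here $B\le^\flat C$ iff $\downarrow B\subseteq\downarrow C$. Fairness: on every infinite execution, every pair $(g,a)\in F^*\times A_m$ with $a\in\operatorname{dom}g$ is picked at some stage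 $n\ge m$. *)

theory Defs
  imports Main
begin

text \<open>The state space S is the (arbitrary) type 'a, ordered by its partial order.\<close>

definition wpo_type :: "'a::order itself \<Rightarrow> bool" where
  "wpo_type _ \<longleftrightarrow> (\<forall>f :: nat \<Rightarrow> 'a. \<exists>i j. i < j \<and> f i \<le> f j)"

definition directed :: "'a::order set \<Rightarrow> bool" where
  "directed D \<longleftrightarrow> D \<noteq> {} \<and> (\<forall>x\<in>D. \<forall>y\<in>D. \<exists>z\<in>D. x \<le> z \<and> y \<le> z)"

definition is_lub :: "'a::order set \<Rightarrow> 'a \<Rightarrow> bool" where
  "is_lub D s \<longleftrightarrow> (\<forall>d\<in>D. d \<le> s) \<and> (\<forall>u. (\<forall>d\<in>D. d \<le> u) \<longrightarrow> s \<le> u)"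

definition lub :: "'a::order set \<Rightarrow> 'a" where
  "lub D = (THE s. is_lub D s)"

definition dcpo_type :: "'a::order itself \<Rightarrow> bool" where
  "dcpo_type _ \<longleftrightarrow> (\<forall>D :: 'a set. directed D \<longrightarrow> (\<exists>s. is_lub D s))"

definition way_below :: "'a::order \<Rightarrow> 'a \<Rightarrow> bool" where
  "way_below x y \<longleftrightarrow>
     (\<forall>D. directed D \<longrightarrow> (\<forall>s. is_lub D s \<longrightarrow> y \<le> s \<longrightarrow> (\<exists>d\<in>D. x \<le> d)))"

definition continuous_dcpo_type :: "'a::order itself \<Rightarrow> bool" where
  "continuous_dcpo_type T \<longleftrightarrow> dcpo_type T \<and>
     (\<forall>x :: 'a. directed {y. way_below y x} \<and> is_lub {y. way_below y x} x)"

definition scott_open :: "'a::order set \<Rightarrow> bool" where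
  "scott_open U \<longleftrightarrow> (\<forall>x\<in>U. \<forall>y. x \<le> y \<longrightarrow> y \<in> U) \<and>
     (\<forall>D s. directed D \<longrightarrow> is_lub D s \<longrightarrow> s \<in> U \<longrightarrow> D \<inter> U \<noteq> {})"

type_synonym 'a pmap = "'a \<Rightarrow> 'a option"

definition pdom :: "'a pmap \<Rightarrow> 'a set" where
  "pdom f = {x. f x \<noteq> None}"

definition partial_continuous :: "'a::order pmap \<Rightarrow> bool" where
  "partial_continuous f \<longleftrightarrow> scott_open (pdom f) \<and>
     (\<forall>D s. directed D \<longrightarrow> D \<subseteq> pdom f \<longrightarrow> is_lub D s \<longrightarrow>
        (\<exists>t. f s = Some t \<and> is_lub {u. \<exists>d\<in>D. f d = Some u} t))"

definition complete_functional_wsts :: "'a::order pmap set \<Rightarrow> bool" where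
  "complete_functional_wsts F \<longleftrightarrow> finite F \<and> wpo_type TYPE('a) \<and>
     continuous_dcpo_type TYPE('a) \<and> (\<forall>f\<in>F. partial_continuous f)"

fun compose_list :: "'a pmap list \<Rightarrow> 'a pmap" where
  "compose_list [] = Some"
| "compose_list (f # fs) = (\<lambda>x. Option.bind (f x) (compose_list fs))"

definition Fstar :: "'a pmap set \<Rightarrow> 'a pmap set" where
  "Fstar F = {compose_list fs | fs. set fs \<subseteq> F}"

fun piter :: "'a pmap \<Rightarrow> nat \<Rightarrow> 'a pmap" where
  "piter g 0 = Some"
| "piter g (Suc n) = (\<lambda>x. Option.bind (piter g n x) g)"

definition accel :: "'a::order pmap \<Rightarrow> 'a pmap" where
  "accel g x = (case g x of None \<Rightarrow> None
     | Some y \<Rightarrow> if x < y then Some (lub {z. \<exists>n. piter g n x = Some z}) else Some y)"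

definition Post :: "'a pmap set \<Rightarrow> 'a set \<Rightarrow> 'a set" where
  "Post F A = {b. \<exists>f\<in>F. \<exists>a\<in>A. f a = Some b}"

definition downclosure :: "'a::order set \<Rightarrow> 'a set" where
  "downclosure B = {x. \<exists>b\<in>B. x \<le> b}"

definition flat_le :: "'a::order set \<Rightarrow> 'a set \<Rightarrow> bool" where
  "flat_le B C \<longleftrightarrow> downclosure B \<subseteq> downclosure C"

definition clover_guard :: "'a::order pmap set \<Rightarrow> 'a set \<Rightarrow> bool" where
  "clover_guard F A \<longleftrightarrow> \<not> flat_le (Post F A) A"

text \<open>Value of A after n iterations of the while loop, given the sequence of
  choices ch (ch n is the pair (g,a) chosen in iteration n+1). Once the loop
  has exited, A no longer changes.\<close>
primrec clover_A :: "'a::order pmap set \<Rightarrow> 'a \<Rightarrow> (nat \<Rightarrow> 'a pmap \<times> 'a) \<Rightarrow> nat \<Rightarrow> 'a set" where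
  "clover_A F s0 ch 0 = {s0}"
| "clover_A F s0 ch (Suc n) =
     (if clover_guard F (clover_A F s0 ch n)
      then clover_A F s0 ch n \<union> {the (accel (fst (ch n)) (snd (ch n)))}
      else clover_A F s0 ch n)"

definition clover_valid :: "'a::order pmap set \<Rightarrow> 'a \<Rightarrow> (nat \<Rightarrow> 'a pmap \<times> 'a) \<Rightarrow> bool" where
  "clover_valid F s0 ch \<longleftrightarrow> (\<forall>n. clover_guard F (clover_A F s0 ch n) \<longrightarrow>
     fst (ch n) \<in> Fstar F \<and> snd (ch n) \<in> clover_A F s0 ch n \<and> snd (ch n) \<in> pdom (fst (ch n)))"

definition clover_fair :: "'a::order pmap set \<Rightarrow> 'a \<Rightarrow> (nat \<Rightarrow> 'a pmap \<times> 'a) \<Rightarrow> bool" where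
  "clover_fair F s0 ch \<longleftrightarrow> ((\<forall>n. clover_guard F (clover_A F s0 ch n)) \<longrightarrow>
     (\<forall>m g a. g \<in> Fstar F \<longrightarrow> a \<in> clover_A F s0 ch m \<longrightarrow> a \<in> pdom g \<longrightarrow>
        (\<exists>n\<ge>m. ch n = (g, a))))"

definition clover_terminates :: "'a::order pmap set \<Rightarrow> 'a \<Rightarrow> (nat \<Rightarrow> 'a pmap \<times> 'a) \<Rightarrow> bool" where
  "clover_terminates F s0 ch \<longleftrightarrow> (\<exists>n. \<not> clover_guard F (clover_A F s0 ch n))"

end

theory Submission
  imports Defs
begin

lemma pc_mono:
  assumes pc: "partial_continuous f" and xy: "(x::'a::order) \<le> y" and fx: "f x = Some u"
  shows "\<exists>v. f y = Some v \<and> u \<le> v"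
proof -
  have xd: "x \<in> pdom f" using fx by (simp add: pdom_def)
  have yd: "y \<in> pdom f" using pc xd xy unfolding partial_continuous_def scott_open_def by blast
  have dir: "directed {x,y}" using xy unfolding directed_def by auto
  have lub: "is_lub {x,y} y" using xy unfolding is_lub_def by auto
  obtain t where t: "f y = Some t" "is_lub {u. \<exists>d\<in>{x,y}. f d = Some u} t"
    using pc dir lub xd yd unfolding partial_continuous_def by blast
  then have "u \<le> t" using fx unfolding is_lub_def by auto
  then show ?thesis using t by auto
qed

lemma accel_ge:
  assumes cw: "complete_functional_wsts F" and fF: "f \<in> F" and fa: "f a = Some b"
  shows "\<exists>c. accel f a = Some c \<and> b \<le> (c::'a::order)"
proof (cases "a < b")
  case False then show ?thesis using fa by (simp add: accel_def)
next
  case True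
  have pc: "partial_continuous f" using cw fF unfolding complete_functional_wsts_def by auto
  have step: "\<exists>u v. piter f k a = Some u \<and> piter f (Suc k) a = Some v \<and> u \<le> v" for k
  proof (induction k)
    case 0 then show ?case using fa True by auto
  next
    case (Suc k)
    then obtain u v where uv: "piter f k a = Some u" "piter f (Suc k) a = Some v" "u \<le> v" by auto
    have fu: "f u = Some v" using uv by simp
    obtain w where "f v = Some w" "v \<le> w" using pc_mono[OF pc uv(3) fu] by auto
    then show ?case using uv by simp
  qed
  define s where "s n = the (piter f n a)" for n
  have ps: "piter f n a = Some (s n)" for n using step[of n] s_def by auto
  have smono: "s n \<le> s (Suc n)" for n using step[of n] ps[of n] ps[of "Suc n"] by auto
  have mono: "m \<le> n \<Longrightarrow> s m \<le> s n" for m n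
    using lift_Suc_mono_le[of s, OF smono] by blast
  define Z where "Z = {z. \<exists>n. piter f n a = Some z}"
  have Z: "Z = range s" using ps unfolding Z_def by (auto simp: image_def)
  have dir: "directed Z" unfolding directed_def Z
    by (auto, metis max.cobounded1 max.cobounded2 mono)
  have dc: "dcpo_type TYPE('a)" using cw
    unfolding complete_functional_wsts_def continuous_dcpo_type_def by auto
  obtain l where l: "is_lub Z l" using dc dir unfolding dcpo_type_def by blast
  have "is_lub Z (lub Z)" unfolding lub_def
  proof (rule theI[of _ l])
    show "is_lub Z l" by (rule l)
    fix y assume "is_lub Z y" then show "y = l" using l unfolding is_lub_def
      by (meson order_antisym)
  qed
  moreover have "b \<in> Z" unfolding Z_def using fa by (intro CollectI exI[of _ 1]) simp
  ultimately have "b \<le> lub Z" unfolding is_lub_def by auto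
  then show ?thesis using True fa by (simp add: accel_def Z_def)
qed

theorem proposition5p4:
  fixes F :: "('a::order) pmap set" and s0 :: 'a and ch :: "nat \<Rightarrow> 'a pmap \<times> 'a"
  assumes "complete_functional_wsts F"
    and "clover_valid F s0 ch"
    and "clover_fair F s0 ch"
    and "finite (\<Union>n. clover_A F s0 ch n)"
  shows "clover_terminates F s0 ch"
proof (rule ccontr)
  let ?A = "clover_A F s0 ch"
  let ?U = "\<Union>n. ?A n"
  assume "\<not> clover_terminates F s0 ch"
  then have g: "\<forall>n. clover_guard F (?A n)" unfolding clover_terminates_def by auto
  have sucsub: "?A n \<subseteq> ?A (Suc n)" for n by auto
  have monoA: "m \<le> n \<Longrightarrow> ?A m \<subseteq> ?A n" for m n
    using lift_Suc_mono_le[of ?A, OF sucsub] by blast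
  have "\<forall>x\<in>?U. \<exists>n. x \<in> ?A n" by blast
  then obtain idx where idx: "\<forall>x\<in>?U. x \<in> ?A (idx x)" by metis
  define N where "N = Max (idx ` ?U)"
  have UN: "?U \<subseteq> ?A N"
  proof
    fix x assume x: "x \<in> ?U"
    have "idx x \<le> N" unfolding N_def using assms(4) x by simp
    then show "x \<in> ?A N" using monoA idx x by blast
  qed
  from g have "\<not> flat_le (Post F (?A N)) (?A N)" unfolding clover_guard_def by auto
  then obtain x where "x \<in> downclosure (Post F (?A N))" "x \<notin> downclosure (?A N)"
    unfolding flat_le_def by auto
  then obtain b where b: "b \<in> Post F (?A N)" "\<forall>c\<in>?A N. \<not> b \<le> c"
    unfolding downclosure_def by (auto intro: order_trans)
  then obtain f a where fa: "f \<in> F" "a \<in> ?A N" "f a = Some b" unfolding Post_def by auto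
  have fcl: "compose_list [f] = f" proof (rule ext)
    fix x show "compose_list [f] x = f x" by (cases "f x") auto
  qed
  have "f \<in> Fstar F" unfolding Fstar_def using fa(1) by (auto intro!: exI[of _ "[f]"] simp: fcl)
  moreover have "a \<in> pdom f" using fa by (simp add: pdom_def)
  ultimately obtain n where n: "n \<ge> N" "ch n = (f, a)"
    using assms(3) g fa(2) unfolding clover_fair_def by blast
  obtain c where c: "accel f a = Some c" "b \<le> c" using accel_ge[OF assms(1) fa(1) fa(3)] by auto
  have "c \<in> ?A (Suc n)" using g n c by simp
  then have "c \<in> ?A N" using UN by blast
  then show False using b c by auto
qed

end
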